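(* For every $d \in \{2,3,4,5,8,12,16,17,24,32,40,48,80,112\}$, the sequence $\left(\left\lfloor n^8/d \right\rfloor\right)_{n \ge 1}$ is eventually prime-free.
   Context: A sequence $(a_n)_{n\ge 1}$ of positive integers is called eventually prime-free if there exists an index $n_0$ such that $a_n$ is composite for all $n \ge n_0$. (Here, as in the paper, this is understood as: only finitely many terms $a_n$ are prime.) *)

theory Defs
  imports Complex_Main "HOL-Computational_Algebra.Primes"
begin

definition eventually_prime_free :: "(nat \<Rightarrow> nat) \<Rightarrow> bool" where
  "eventually_prime_free a \<longleftrightarrow> finite {n. n \<ge> 1 \<and> prime (a n)}"

end

theory Submission
  imports Defs
begin

definition okf :: "nat \<Rightarrow> nat \<Rightarrow> nat \<Rightarrow> bool" where
  "okf d m r = (let x = r^8 mod m in x mod d \<in> {0,1,4,9,16,25,49,64,81} \<or> x < d)"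

fun allb :: "(nat \<Rightarrow> bool) \<Rightarrow> nat \<Rightarrow> bool" where
  "allb P 0 = True" | "allb P (Suc n) = (P n \<and> allb P n)"

lemma allb_eq: "allb P n = (\<forall>r<n. P r)"
  by (induction n) (auto simp: less_Suc_eq)

lemma allb_num: "allb P (numeral k) = (P (pred_numeral k) \<and> allb P (pred_numeral k))"
  by (simp add: numeral_eq_Suc)

lemma comp_lemma:
  fixes d q A B :: nat
  assumes "d * q = A * B" "A > d" "B > d" "d > 0"
  shows "\<not> prime q"
proof
  assume pq: "prime q"
  define g where "g = gcd A d"
  have g0: "g > 0" using assms(4) g_def by simp
  obtain a' where a': "A = g * a'" unfolding g_def by (metis gcd_dvd1 dvdE)
  obtain d' where d': "d = g * d'" unfolding g_def by (metis gcd_dvd2 dvdE)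
  have cop: "coprime a' d'"
  proof -
    have "g * gcd a' d' = gcd (g * a') (g * d')" by (rule gcd_mult_distrib_nat)
    also have "\<dots> = g"
    proof -
      have "gcd A d = g" by (simp add: g_def)
      thus ?thesis using a' d' by simp
    qed
    finally have "gcd a' d' = 1" using g0 by simp
    thus ?thesis by (simp add: coprime_iff_gcd_eq_1)
  qed
  have "g * (d' * q) = g * (a' * B)" using assms(1) a' d' by (simp add: ac_simps)
  hence e: "d' * q = a' * B" using g0 by simp
  hence "d' dvd a' * B" by (metis dvd_triv_left)
  hence "d' dvd B" using cop by (metis coprime_commute coprime_dvd_mult_right_iff)
  then obtain b' where b': "B = d' * b'" by (auto elim: dvdE)
  have d'0: "d' > 0" using d' assms(4) by auto
  have "d' * q = d' * (a' * b')" using e b' by (simp add: ac_simps)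
  hence qe: "q = a' * b'" using d'0 by simp
  have gd: "g \<le> d" using g_def assms(4) by (simp add: gcd_le2_nat)
  have "a' > 1"
  proof (rule ccontr)
    assume "\<not> a' > 1" hence "a' \<le> 1" by simp
    hence "A \<le> g" using a' by (metis mult_le_mono2 mult.right_neutral)
    thus False using gd assms(2) by simp
  qed
  moreover have "b' > 1"
  proof (rule ccontr)
    assume "\<not> b' > 1" hence "b' \<le> 1" by simp
    hence "B \<le> d'" using b' by (metis mult_le_mono2 mult.right_neutral)
    moreover have "d' \<le> d" using d' g0 by simp
    ultimately show False using assms(3) by simp
  qed
  moreover have "prime (a' * b')" using pq qe by (simp only:)
  hence "a' = 1 \<or> b' = 1" by (rule prime_product)
  ultimately show False by linarith
qed

lemma sq_lemma:
  fixes n d q t :: nat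
  assumes e: "n^8 = d * q + t^2" and tl: "t \<le> n^4"
  shows "d * q = (n^4 - t) * (n^4 + t)"
proof -
  define m where "m = n^4 - t"
  have nm: "n^4 = m + t" using tl m_def by simp
  have "n^8 = (n^4)^2" by (simp flip: power_mult)
  hence "(m+t)^2 = d * q + t^2" using e nm by simp
  moreover have "(m+t)^2 = m * (m + 2*t) + t^2" by (simp add: power2_eq_square algebra_simps)
  ultimately have 1: "d * q = m * (m + 2*t)" by linarith
  have 2: "n^4 - t = m" "n^4 + t = m + 2*t" using nm by simp_all
  show ?thesis unfolding 2 by (rule 1)
qed

lemma main_lemma:
  fixes d n :: nat
  assumes d: "d > 0"
    and H0: "allb (okf d (2*d)) (2*d)"
    and n: "n \<ge> d + 10"
  shows "\<not> prime (n^8 div d)"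
proof -
  have H: "\<forall>r<2*d. (r^8 mod (2*d)) mod d \<in> {0,1,4,9,16,25,49,64,81} \<or> r^8 mod (2*d) < d"
    using H0 unfolding allb_eq okf_def Let_def by blast
  define r where "r = n mod (2*d)"
  have r: "r < 2*d" using d r_def by simp
  define b where "b = n^8 mod (2*d)"
  have b: "b = r^8 mod (2*d)" unfolding b_def r_def by (simp add: power_mod)
  have bm: "b mod d = n^8 mod d" unfolding b_def by (simp add: mod_mod_cancel)
  have n4: "n^4 \<ge> n" using n by (simp add: self_le_power)
  have n8: "n^8 \<ge> n * n"
  proof -
    have "n^8 = n^4 * n^4" by (simp flip: power_add)
    moreover have "n^4 * n^4 \<ge> n * n" using n4 by (rule mult_le_mono[OF _ n4])
    ultimately show ?thesis by simp
  qed
  from H r b consider (sq) "b mod d \<in> {0,1,4,9,16,25,49,64,81}" | (ev) "b < d" by auto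
  then show ?thesis
  proof cases
    case sq
    have "b mod d \<in> (\<lambda>t::nat. t^2) ` {0,1,2,3,4,5,7,8,9}" using sq by simp
    then obtain t :: nat where t0: "t \<in> {0,1,2,3,4,5,7,8,9}" and t1: "b mod d = t^2" by (elim imageE) blast
    have t: "b mod d = t^2" "t \<le> 9" using t0 t1 by auto
    define q where "q = n^8 div d"
    have "n^8 = d * q + t^2" proof -
      have "n^8 = d*q + n^8 mod d" unfolding q_def by (rule mult_div_mod_eq[symmetric])
      thus ?thesis using t bm by simp
    qed
    moreover have "t \<le> n^4" using t n n4 by linarith
    ultimately have "d * q = (n^4 - t) * (n^4 + t)" by (rule sq_lemma)
    then show ?thesis unfolding q_def[symmetric]
      by (rule comp_lemma) (use t n n4 d in linarith)+
  next
    case ev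
    have "n^8 div d = 2 * (n^8 div (2*d)) + b div d"
    proof -
      have a: "n^8 div d = 2 * (n^8 div d div 2) + n^8 div d mod 2" by simp
      have "n^8 mod (d*2) = d * (n^8 div d mod 2) + n^8 mod d" by (rule mod_mult2_eq)
      hence "b div d = n^8 div d mod 2" unfolding b_def using d by (simp add: mult.commute)
      moreover have "n^8 div (2*d) = n^8 div d div 2" by (simp add: div_mult2_eq mult.commute)
      ultimately show ?thesis using a by simp
    qed
    hence evn: "even (n^8 div d)" using ev by simp
    have "n^8 div d \<ge> 3"
    proof -
      have "3 * d \<le> n * n" by (intro mult_le_mono) (use n in linarith)+
      hence "3 * d \<le> n^8" using n8 by linarith
      hence "3 * d div d \<le> n^8 div d" by (rule div_le_mono)
      thus ?thesis using d by simp
    qed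
    show ?thesis
    proof
      assume pq: "prime (n^8 div d)"
      have "odd (n^8 div d)" by (rule prime_odd_nat[OF pq]) (use \<open>n^8 div d \<ge> 3\<close> in linarith)
      thus False using evn by (rule notE)
    qed
  qed
qed

theorem theorem5:
  fixes d :: nat
  assumes "d \<in> {2,3,4,5,8,12,16,17,24,32,40,48,80,112}"
  shows "eventually_prime_free (\<lambda>n. nat \<lfloor>real (n ^ 8) / real d\<rfloor>)"
proof -
  have d0: "d > 0" using assms by auto
  have H: "allb (okf d (2*d)) (2*d)"
    using assms by (elim insertE emptyE; simp add: allb_num okf_def Let_def)
  have "{n. n \<ge> 1 \<and> prime (nat \<lfloor>real (n ^ 8) / real d\<rfloor>)} \<subseteq> {..<d+10}"
  proof
    fix n assume "n \<in> {n. n \<ge> 1 \<and> prime (nat \<lfloor>real (n ^ 8) / real d\<rfloor>)}"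
    hence p: "prime (nat \<lfloor>real (n ^ 8) / real d\<rfloor>)" by blast
    have "nat \<lfloor>real (n ^ 8) / real d\<rfloor> = n^8 div d"
    proof -
      have "\<lfloor>real (n ^ 8) / real d\<rfloor> = int (n^8 div d)" by (rule floor_divide_of_nat_eq)
      thus ?thesis by (simp only: nat_int)
    qed
    hence pr: "prime (n^8 div d)" using p by (simp only:)
    show "n \<in> {..<d+10}"
    proof (rule ccontr)
      assume "n \<notin> {..<d+10}"
      hence "n \<ge> d + 10" by simp
      hence "\<not> prime (n^8 div d)" by (rule main_lemma[OF d0 H])
      thus False using pr by (rule notE)
    qed
  qed
  hence "finite {n. n \<ge> 1 \<and> prime (nat \<lfloor>real (n ^ 8) / real d\<rfloor>)}"
    by (rule finite_subset) simp
  thus ?thesis unfolding eventually_prime_free_def .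
qed

end
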